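(* For every integer $T>0$, every $\varepsilon,m>0$, $\delta\in(0,1)$, and every pair of distinct edges $a\ne f$ of the lattice of size $T$, writing $A(a\to f)=A(a\to f;m,\varepsilon,\delta,T)$, $$A(a\to f)=\begin{cases}A(f\to a),&\text{if }a\perp f,\\ -A(f\to a),&\text{if }a\parallel f.\end{cases}$$
   Context: Fix an integer $T>0$, $\varepsilon,m>0$, $\delta\in(0,1)$. The lattice is $\{(x,t)\in[0,T\varepsilon]^2: 2x/\varepsilon,2t/\varepsilon,(x+t)/\varepsilon\in\mathbb{Z}\}$ modulo $(x,0)\sim(x,T\varepsilon)$, $(0,t)\sim(T\varepsilon,t)$. A lattice point is even/odd if $2x/\varepsilon$ is even/odd. An edge is a vector from a lattice point $(x,t)$ to $(x+\varepsilon/2,t+\varepsilon/2)$ or $(x-\varepsilon/2,t+\varepsilon/2)$; two edges are thus either parallel or orthogonal. A path is a finite sequence of distinct edges, each ending where the next starts. A cycle is a sequence of edges, each ending where the next starts, whose first and last edges coincide, with no other repetitions and at least one edge in between; a loop is a cycle up to cyclic change of the starting edge. A node of a path/loop $s$ is an ordered pair of consecutive edges of $s$; a turn is a node with orthogonal edges; a node/turn is even/odd according to the endpoint of its first edge. The arrow is $A(s)=\pm\frac{(-im\varepsilon)^{\mathrm{oddturns}(s)}(-\delta)^{\mathrm{eventurns}(s)}}{(1+m^2\varepsilon^2)^{\mathrm{oddnodes}(s)/2}(1-\delta^2)^{\mathrm{evennodes}(s)/2}}$, minus iff $s$ is a loop. A loop configuration is a set of pairwise edge-disjoint loops; one with source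 $a$ and sink $f$ is an edge-disjoint set of loops and exactly one path starting with $a$ and ending with $f$. Its arrow $A(S)$ is the product of arrows of its members (empty product $1$). The finite-lattice propagator is $A(a\to f;m,\varepsilon,\delta,T):=\frac{\sum_{S\text{ with source }a,\text{ sink }f}A(S)}{\sum_S A(S)}$ (denominator over all loop configurations; it is known to be nonzero). *)

theory Defs
  imports Complex_Main
begin

text \<open>Coordinates are rescaled: a lattice point (x,t) is encoded by the pair
  (X,Y) = (2x/eps, 2t/eps) taken modulo 2T (periodic identification), with X+Y even.
  An edge is encoded by its starting point and its direction:
  True = towards (x+eps/2, t+eps/2), False = towards (x-eps/2, t+eps/2).\<close>

type_synonym edge = "nat \<times> nat \<times> bool"

definition lattice_edges :: "nat \<Rightarrow> edge set" where
  "lattice_edges T = {(x, y, d). x < 2 * T \<and> y < 2 * T \<and> even (x + y)}"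

definition edge_start :: "edge \<Rightarrow> nat \<times> nat" where
  "edge_start e = (case e of (x, y, d) \<Rightarrow> (x, y))"

definition edge_dir :: "edge \<Rightarrow> bool" where
  "edge_dir e = (case e of (x, y, d) \<Rightarrow> d)"

definition edge_end :: "nat \<Rightarrow> edge \<Rightarrow> nat \<times> nat" where
  "edge_end T e = (case e of (x, y, d) \<Rightarrow>
     ((if d then x + 1 else x + 2 * T - 1) mod (2 * T), (y + 1) mod (2 * T)))"

definition parallel :: "edge \<Rightarrow> edge \<Rightarrow> bool" where
  "parallel e e' \<longleftrightarrow> edge_dir e = edge_dir e'"

definition orthogonal :: "edge \<Rightarrow> edge \<Rightarrow> bool" where
  "orthogonal e e' \<longleftrightarrow> edge_dir e \<noteq> edge_dir e'"

definition chained :: "nat \<Rightarrow> edge list \<Rightarrow> bool" where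
  "chained T s \<longleftrightarrow> (\<forall>i. Suc i < length s \<longrightarrow> edge_end T (s ! i) = edge_start (s ! Suc i))"

definition is_path :: "nat \<Rightarrow> edge list \<Rightarrow> bool" where
  "is_path T p \<longleftrightarrow> p \<noteq> [] \<and> set p \<subseteq> lattice_edges T \<and> distinct p \<and> chained T p"

definition is_cycle :: "nat \<Rightarrow> edge list \<Rightarrow> bool" where
  "is_cycle T c \<longleftrightarrow> length c \<ge> 3 \<and> hd c = last c \<and> distinct (butlast c)
      \<and> set c \<subseteq> lattice_edges T \<and> chained T c"

definition cyclic_shift :: "edge list \<Rightarrow> edge list \<Rightarrow> bool" where
  "cyclic_shift c c' \<longleftrightarrow> (\<exists>n. c' = rotate n (butlast c) @ [hd (rotate n (butlast c))])"

definition loops :: "nat \<Rightarrow> edge list set set" where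
  "loops T = {{c'. is_cycle T c' \<and> cyclic_shift c c'} | c. is_cycle T c}"

definition loop_edges :: "edge list set \<Rightarrow> edge set" where
  "loop_edges L = (\<Union>c\<in>L. set c)"

text \<open>Nodes: ordered pairs of consecutive edges (for a cycle this includes the wrap-around pair).\<close>
definition nodes :: "edge list \<Rightarrow> (edge \<times> edge) list" where
  "nodes s = zip s (tl s)"

definition is_turn :: "edge \<times> edge \<Rightarrow> bool" where
  "is_turn n \<longleftrightarrow> orthogonal (fst n) (snd n)"

text \<open>A node is even/odd according to the (end)point of its first edge, i.e. the vertex
  shared by the two edges; a point is even iff its rescaled x-coordinate 2x/eps is even.\<close>
definition node_even :: "nat \<Rightarrow> edge \<times> edge \<Rightarrow> bool" where
  "node_even T n \<longleftrightarrow> even (fst (edge_end T (fst n)))"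

definition arrow_unsigned :: "nat \<Rightarrow> real \<Rightarrow> real \<Rightarrow> real \<Rightarrow> edge list \<Rightarrow> complex" where
  "arrow_unsigned T m \<epsilon> \<delta> s =
     (let ns = nodes s;
          oddturns = length (filter (\<lambda>n. is_turn n \<and> \<not> node_even T n) ns);
          eventurns = length (filter (\<lambda>n. is_turn n \<and> node_even T n) ns);
          oddnodes = length (filter (\<lambda>n. \<not> node_even T n) ns);
          evennodes = length (filter (\<lambda>n. node_even T n) ns)
      in ((- \<i> * complex_of_real (m * \<epsilon>)) ^ oddturns * complex_of_real ((- \<delta>) ^ eventurns))
         / complex_of_real ((1 + m\<^sup>2 * \<epsilon>\<^sup>2) powr (real oddnodes / 2)
                            * (1 - \<delta>\<^sup>2) powr (real evennodes / 2)))"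

definition arrow_path :: "nat \<Rightarrow> real \<Rightarrow> real \<Rightarrow> real \<Rightarrow> edge list \<Rightarrow> complex" where
  "arrow_path T m \<epsilon> \<delta> p = arrow_unsigned T m \<epsilon> \<delta> p"

text \<open>Arrow of a loop (minus sign); computed on any representing cycle
  (the value does not depend on the choice).\<close>
definition arrow_loop :: "nat \<Rightarrow> real \<Rightarrow> real \<Rightarrow> real \<Rightarrow> edge list set \<Rightarrow> complex" where
  "arrow_loop T m \<epsilon> \<delta> L = - arrow_unsigned T m \<epsilon> \<delta> (SOME c. c \<in> L)"

definition loop_configs :: "nat \<Rightarrow> edge list set set set" where
  "loop_configs T = {S. S \<subseteq> loops T \<and>
     (\<forall>L1\<in>S. \<forall>L2\<in>S. L1 \<noteq> L2 \<longrightarrow> loop_edges L1 \<inter> loop_edges L2 = {})}"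

definition source_sink_configs :: "nat \<Rightarrow> edge \<Rightarrow> edge \<Rightarrow> (edge list set set \<times> edge list) set" where
  "source_sink_configs T a f = {(S, p). S \<in> loop_configs T \<and> is_path T p \<and> hd p = a \<and> last p = f
      \<and> (\<forall>L\<in>S. loop_edges L \<inter> set p = {})}"

definition arrow_config :: "nat \<Rightarrow> real \<Rightarrow> real \<Rightarrow> real \<Rightarrow> edge list set set \<Rightarrow> complex" where
  "arrow_config T m \<epsilon> \<delta> S = (\<Prod>L\<in>S. arrow_loop T m \<epsilon> \<delta> L)"

definition propagator :: "edge \<Rightarrow> edge \<Rightarrow> real \<Rightarrow> real \<Rightarrow> real \<Rightarrow> nat \<Rightarrow> complex" where
  "propagator a f m \<epsilon> \<delta> T =
     (\<Sum>(S, p)\<in>source_sink_configs T a f. arrow_config T m \<epsilon> \<delta> S * arrow_path T m \<epsilon> \<delta> p)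
     / (\<Sum>S\<in>loop_configs T. arrow_config T m \<epsilon> \<delta> S)"

end

theory Submission
  imports Defs
begin


definition nw :: "nat \<Rightarrow> real \<Rightarrow> real \<Rightarrow> real \<Rightarrow> edge \<times> edge \<Rightarrow> complex" where
  "nw T m \<epsilon> \<delta> n = (if node_even T n
      then (if is_turn n then complex_of_real (- \<delta>) else 1) / complex_of_real (sqrt (1 - \<delta>\<^sup>2))
      else (if is_turn n then - \<i> * complex_of_real (m * \<epsilon>) else 1) / complex_of_real (sqrt (1 + m\<^sup>2 * \<epsilon>\<^sup>2)))"

lemma powr_half_pow: "0 < (x::real) \<Longrightarrow> x powr (real k / 2) = sqrt x ^ k"
proof -
  assume x: "0 < x"
  have "sqrt x ^ k = (x powr (1/2)) ^ k" using x by (simp add: powr_half_sqrt)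
  also have "\<dots> = (x powr (1/2)) powr (real k)" using x by (simp add: powr_realpow)
  also have "\<dots> = x powr (real k / 2)" by (simp add: powr_powr)
  finally show ?thesis by simp
qed

lemma AU_gen:
  fixes c1 c0 :: real
  assumes "0 < c1" "0 < c0" "c1 = sqrt (1 + m\<^sup>2 * \<epsilon>\<^sup>2)" "c0 = sqrt (1 - \<delta>\<^sup>2)"
  shows "((- \<i> * complex_of_real (m * \<epsilon>)) ^ length (filter (\<lambda>n. is_turn n \<and> \<not> node_even T n) ns)
          * complex_of_real ((- \<delta>) ^ length (filter (\<lambda>n. is_turn n \<and> node_even T n) ns)))
         / complex_of_real (c1 ^ length (filter (\<lambda>n. \<not> node_even T n) ns)
                            * c0 ^ length (filter (\<lambda>n. node_even T n) ns))
       = prod_list (map (nw T m \<epsilon> \<delta>) ns)"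
proof (induction ns)
  case Nil
  then show ?case by simp
next
  case (Cons n ns)
  have c1: "complex_of_real c1 \<noteq> 0" and c0: "complex_of_real c0 \<noteq> 0" using assms by auto
  have nwv: "nw T m \<epsilon> \<delta> n = (if node_even T n
      then (if is_turn n then complex_of_real (- \<delta>) else 1) / complex_of_real c0
      else (if is_turn n then - \<i> * complex_of_real (m * \<epsilon>) else 1) / complex_of_real c1)"
    using assms(3,4) by (simp add: nw_def)
  show ?case
    unfolding list.map prod_list.Cons Cons.IH[symmetric] nwv
    using c1 c0
    by (cases "node_even T n"; cases "is_turn n") (simp_all add: field_simps)
qed

lemma AU:
  assumes "\<delta> < 1" "0 \<le> \<delta>"
  shows "arrow_unsigned T m \<epsilon> \<delta> s = prod_list (map (nw T m \<epsilon> \<delta>) (nodes s))"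
proof -
  have "\<delta> * \<delta> \<le> \<delta> * 1" using assms by (intro mult_left_mono) auto
  then have d: "0 < 1 - \<delta>\<^sup>2" using assms by (simp add: power2_eq_square)
  have m: "0 < 1 + m\<^sup>2 * \<epsilon>\<^sup>2" by (simp add: add_pos_nonneg)
  show ?thesis
    unfolding arrow_unsigned_def Let_def
    apply (subst powr_half_pow[OF m])
    apply (subst powr_half_pow[OF d])
    apply (rule AU_gen)
    using d m by auto
qed



definition pathw :: "nat \<Rightarrow> real \<Rightarrow> real \<Rightarrow> real \<Rightarrow> edge list \<Rightarrow> complex" where
  "pathw T m \<epsilon> \<delta> p = prod_list (map (nw T m \<epsilon> \<delta>) (nodes p))"

definition loopw :: "nat \<Rightarrow> real \<Rightarrow> real \<Rightarrow> real \<Rightarrow> edge list \<Rightarrow> complex" where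
  "loopw T m \<epsilon> \<delta> r = prod_list (map (nw T m \<epsilon> \<delta>) (zip r (rotate1 r)))"

definition cyc :: "nat \<Rightarrow> edge list \<Rightarrow> bool" where
  "cyc T r \<longleftrightarrow> 2 \<le> length r \<and> distinct r \<and> set r \<subseteq> lattice_edges T \<and> chained T (r @ [hd r])"

definition Lp :: "nat \<Rightarrow> edge list \<Rightarrow> edge list set" where
  "Lp T r = {c'. is_cycle T c' \<and> cyclic_shift (r @ [hd r]) c'}"

lemma chained_Nil[simp]: "chained T []" by (simp add: chained_def)

lemma chained_Cons:
  "chained T (x # xs) \<longleftrightarrow> (xs = [] \<or> edge_end T x = edge_start (hd xs)) \<and> chained T xs"
proof
  assume h: "chained T (x # xs)"
  have 1: "xs = [] \<or> edge_end T x = edge_start (hd xs)"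
  proof (cases xs)
    case (Cons y ys)
    then show ?thesis using h[unfolded chained_def, rule_format, of 0] by simp
  qed simp
  have 2: "chained T xs"
    unfolding chained_def
  proof (intro allI impI)
    fix i assume "Suc i < length xs"
    then show "edge_end T (xs ! i) = edge_start (xs ! Suc i)"
      using h[unfolded chained_def, rule_format, of "Suc i"] by simp
  qed
  show "(xs = [] \<or> edge_end T x = edge_start (hd xs)) \<and> chained T xs" using 1 2 by blast
next
  assume h: "(xs = [] \<or> edge_end T x = edge_start (hd xs)) \<and> chained T xs"
  show "chained T (x # xs)"
    unfolding chained_def
  proof (intro allI impI)
    fix i assume i: "Suc i < length (x # xs)"
    show "edge_end T ((x # xs) ! i) = edge_start ((x # xs) ! Suc i)"
    proof (cases i)
      case 0
      then show ?thesis using h i by (cases xs) auto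
    next
      case (Suc j)
      then show ?thesis using h i unfolding chained_def by auto
    qed
  qed
qed

lemma chained_append:
  "chained T (p @ q) \<longleftrightarrow> chained T p \<and> chained T q \<and> (p \<noteq> [] \<and> q \<noteq> [] \<longrightarrow> edge_end T (last p) = edge_start (hd q))"
  by (induction p) (auto simp: chained_Cons)

lemma chained_take: "chained T p \<Longrightarrow> chained T (take k p)"
  using chained_append[of T "take k p" "drop k p"] by simp

lemma chained_drop: "chained T p \<Longrightarrow> chained T (drop k p)"
  using chained_append[of T "take k p" "drop k p"] by simp

lemma nodes_Cons: "nodes (x # xs) = (if xs = [] then [] else (x, hd xs) # nodes xs)"
  by (cases xs) (auto simp: nodes_def)

lemma nodes_append:
  "q \<noteq> [] \<Longrightarrow> r \<noteq> [] \<Longrightarrow> nodes (q @ r) = nodes q @ (last q, hd r) # nodes r"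
  by (induction q) (auto simp: nodes_Cons)

lemma pathw_append:
  "q \<noteq> [] \<Longrightarrow> r \<noteq> [] \<Longrightarrow>
   pathw T m \<epsilon> \<delta> (q @ r) = pathw T m \<epsilon> \<delta> q * nw T m \<epsilon> \<delta> (last q, hd r) * pathw T m \<epsilon> \<delta> r"
  by (simp add: pathw_def nodes_append)

lemma pathw_single[simp]: "pathw T m \<epsilon> \<delta> [x] = 1"
  by (simp add: pathw_def nodes_def)

lemma zip_rotate1: "r \<noteq> [] \<Longrightarrow> zip r (rotate1 r) = nodes r @ [(last r, hd r)]"
proof (induction r)
  case (Cons x xs)
  then show ?case
  proof (cases xs)
    case Nil then show ?thesis by (simp add: nodes_def)
  next
    case (Cons y ys)
    have "zip (x # xs) (xs @ [x]) = (x, y) # zip xs (ys @ [x])" using Cons by simp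
    also have "zip xs (ys @ [x]) = nodes xs @ [(last xs, x)]"
      using Cons by (induction ys arbitrary: y xs) (auto simp: nodes_def)
    finally show ?thesis using Cons by (simp add: nodes_def)
  qed
qed simp

lemma loopw_pathw:
  "r \<noteq> [] \<Longrightarrow> loopw T m \<epsilon> \<delta> r = pathw T m \<epsilon> \<delta> r * nw T m \<epsilon> \<delta> (last r, hd r)"
  by (simp add: loopw_def pathw_def zip_rotate1)

lemma prod_list_rotate1: "prod_list (rotate1 (xs :: complex list)) = prod_list xs"
  by (cases xs) (auto simp: mult.commute)

lemma prod_list_rotate: "prod_list (rotate n (xs :: complex list)) = prod_list xs"
  by (induction n) (simp_all add: rotate_Suc prod_list_rotate1 del: rotate1.simps)

lemma zip_rotate: "length xs = length ys \<Longrightarrow> zip (rotate n xs) (rotate n ys) = rotate n (zip xs ys)"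
proof (rule nth_equalityI)
  fix i assume "length xs = length ys" "i < length (zip (rotate n xs) (rotate n ys))"
  moreover have "0 < length ys" using calculation by (cases ys) auto
  moreover have "(n + i) mod length ys < length ys" using calculation by simp
  ultimately show "zip (rotate n xs) (rotate n ys) ! i = rotate n (zip xs ys) ! i"
    by (simp add: nth_rotate nth_zip)
qed simp

lemma loopw_rotate: "loopw T m \<epsilon> \<delta> (rotate n r) = loopw T m \<epsilon> \<delta> r"
proof -
  have "zip (rotate n r) (rotate1 (rotate n r)) = zip (rotate n r) (rotate n (rotate1 r))"
    by (simp add: rotate1_rotate_swap)
  also have "\<dots> = rotate n (zip r (rotate1 r))" by (simp add: zip_rotate)
  finally show ?thesis
    by (simp add: loopw_def rotate_map[symmetric] prod_list_rotate)
qed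

lemma arrow_path_pathw:
  assumes "\<delta> < 1" "0 \<le> \<delta>"
  shows "arrow_path T m \<epsilon> \<delta> p = pathw T m \<epsilon> \<delta> p"
  using AU[OF assms] by (simp add: arrow_path_def pathw_def)



lemma cyc_rotate1: assumes "cyc T r" shows "cyc T (rotate1 r)"
proof -
  have l2: "2 \<le> length r" using assms by (simp add: cyc_def)
  obtain x xs where r: "r = x # xs" using l2 by (cases r) auto
  have xs: "xs \<noteq> []" using l2 r by auto
  have ch: "chained T (x # xs @ [x])" using assms r by (simp add: cyc_def)
  then have "edge_end T x = edge_start (hd (xs @ [x]))" "chained T (xs @ [x])"
    by (simp_all add: chained_Cons)
  then have "chained T ((xs @ [x]) @ [hd (xs @ [x])])"
    using chained_append[of T "xs @ [x]" "[hd (xs @ [x])]"] by (simp add: chained_Cons)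
  then show ?thesis using assms r xs by (auto simp: cyc_def)
qed

lemma cyc_rotate: "cyc T r \<Longrightarrow> cyc T (rotate n r)"
  by (induction n) (simp_all add: rotate_Suc cyc_rotate1 del: rotate1.simps)

lemma is_cycle_iff: "is_cycle T c \<longleftrightarrow> (\<exists>r. cyc T r \<and> c = r @ [hd r])"
proof
  assume h: "is_cycle T c"
  then have ne: "c \<noteq> []" by (auto simp: is_cycle_def)
  define r where "r = butlast c"
  have "length r = length c - 1" by (simp add: r_def)
  then have rne: "r \<noteq> []" using h by (auto simp: is_cycle_def)
  have c: "c = r @ [last c]" using ne by (simp add: r_def)
  have "hd c = hd r" using rne c by (metis hd_append2)
  then have c2: "c = r @ [hd r]" using h c by (simp add: is_cycle_def)
  have "length c = length r + 1" using c2 by simp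
  then have "2 \<le> length r" using h by (simp add: is_cycle_def)
  moreover have "distinct r" using h by (simp add: is_cycle_def r_def)
  moreover have "set r \<subseteq> lattice_edges T" using h c2 by (auto simp: is_cycle_def)
  moreover have "chained T (r @ [hd r])" using h c2 by (simp add: is_cycle_def)
  ultimately have "cyc T r" by (simp add: cyc_def)
  then show "\<exists>r. cyc T r \<and> c = r @ [hd r]" using c2 by blast
next
  assume "\<exists>r. cyc T r \<and> c = r @ [hd r]"
  then obtain r where r: "cyc T r" "c = r @ [hd r]" by blast
  then have "r \<noteq> []" by (auto simp: cyc_def)
  then show "is_cycle T c" using r by (auto simp: cyc_def is_cycle_def)
qed

lemma Lp_eq: "cyc T r \<Longrightarrow> Lp T r = range (\<lambda>n. rotate n r @ [hd (rotate n r)])"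
  unfolding Lp_def cyclic_shift_def
  by (auto simp: is_cycle_iff intro: cyc_rotate)

lemma loops_eq: "loops T = Lp T ` {r. cyc T r}"
  unfolding loops_def Lp_def by (auto simp: is_cycle_iff)

lemma loop_edges_Lp: assumes "cyc T r" shows "loop_edges (Lp T r) = set r"
proof -
  have "r \<noteq> []" using assms by (auto simp: cyc_def)
  then have "set (rotate n r @ [hd (rotate n r)]) = set r" for n
  proof -
    have "rotate n r \<noteq> []" using \<open>r \<noteq> []\<close> by simp
    then have "hd (rotate n r) \<in> set r" using hd_in_set set_rotate by metis
    then show ?thesis by auto
  qed
  then show ?thesis unfolding loop_edges_def Lp_eq[OF assms] by auto
qed

lemma Lp_rotate: assumes "cyc T r" shows "Lp T (rotate k r) = Lp T r"
proof -
  let ?l = "length r"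
  have l: "0 < ?l" using assms by (auto simp: cyc_def)
  have "range (\<lambda>n. rotate n (rotate k r) @ [hd (rotate n (rotate k r))])
      = range (\<lambda>n. rotate n r @ [hd (rotate n r)])"
  proof (intro equalityI subsetI)
    fix c assume "c \<in> range (\<lambda>n. rotate n (rotate k r) @ [hd (rotate n (rotate k r))])"
    then obtain n where "c = rotate (n + k) r @ [hd (rotate (n + k) r)]"
      by (auto simp: rotate_rotate)
    then show "c \<in> range (\<lambda>n. rotate n r @ [hd (rotate n r)])" by blast
  next
    fix c assume "c \<in> range (\<lambda>n. rotate n r @ [hd (rotate n r)])"
    then obtain n where c: "c = rotate n r @ [hd (rotate n r)]" by blast
    define n' where "n' = n + (?l - k mod ?l)"
    have "(n' + k) mod ?l = n mod ?l"
    proof -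
      define q where "q = k div ?l"
      define rr where "rr = k mod ?l"
      have k: "k = ?l * q + rr" unfolding q_def rr_def by simp
      have "rr < ?l" using l unfolding rr_def by simp
      then have "n' + k = n + ?l * (q + 1)"
        unfolding n'_def rr_def[symmetric] k by (simp add: algebra_simps)
      then show ?thesis by (metis mod_mult_self1 mult.commute)
    qed
    then have "rotate (n' + k) r = rotate n r" by (metis rotate_conv_mod)
    then have "c = rotate n' (rotate k r) @ [hd (rotate n' (rotate k r))]"
      using c by (simp add: rotate_rotate)
    then show "c \<in> range (\<lambda>n. rotate n (rotate k r) @ [hd (rotate n (rotate k r))])" by blast
  qed
  then show ?thesis using Lp_eq[OF assms] Lp_eq[OF cyc_rotate[OF assms]] by simp
qed

lemma Lp_inj: assumes "cyc T r" "cyc T r'" "Lp T r = Lp T r'" shows "\<exists>n. r' = rotate n r"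
proof -
  have "r' @ [hd r'] = rotate 0 r' @ [hd (rotate 0 r')]" by simp
  then have "r' @ [hd r'] \<in> Lp T r'" unfolding Lp_eq[OF assms(2)] by (rule range_eqI)
  then have "r' @ [hd r'] \<in> Lp T r" using assms by simp
  then obtain n where "r' @ [hd r'] = rotate n r @ [hd (rotate n r)]" using Lp_eq[OF assms(1)] by auto
  then show ?thesis by auto
qed

lemma Lp_inj_hd:
  assumes "cyc T r" "cyc T r'" "Lp T r = Lp T r'" "hd r = hd r'" shows "r = r'"
proof -
  obtain n where n: "r' = rotate n r" using Lp_inj[OF assms(1-3)] by blast
  have ne: "r \<noteq> []" and d: "distinct r" using assms(1) by (auto simp: cyc_def)
  have "hd r' = r ! (n mod length r)" using n ne by (simp add: hd_rotate_conv_nth)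
  moreover have "hd r = r ! 0" using ne by (simp add: hd_conv_nth)
  ultimately have "r ! (n mod length r) = r ! 0" using assms(4) by simp
  moreover have "n mod length r < length r" "0 < length r" using ne by auto
  ultimately have "n mod length r = 0" using nth_eq_iff_index_eq[OF d] by blast
  moreover have "rotate n r = rotate (n mod length r) r" by (rule rotate_conv_mod)
  ultimately show ?thesis using n by simp
qed

definition rotf :: "edge \<Rightarrow> edge list \<Rightarrow> edge list" where
  "rotf f r = dropWhile (\<lambda>x. x \<noteq> f) r @ takeWhile (\<lambda>x. x \<noteq> f) r"

lemma rotf_rotate: "rotf f r = rotate (length (takeWhile (\<lambda>x. x \<noteq> f) r)) r"
proof -
  have "rotate (length (takeWhile (\<lambda>x. x \<noteq> f) r)) (takeWhile (\<lambda>x. x \<noteq> f) r @ dropWhile (\<lambda>x. x \<noteq> f) r)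
     = rotf f r" unfolding rotf_def by (rule rotate_append)
  then show ?thesis by simp
qed

lemma hd_rotf: "f \<in> set r \<Longrightarrow> hd (rotf f r) = f"
  unfolding rotf_def
  by (metis (mono_tags, lifting) dropWhile_eq_Nil_conv hd_append2 hd_dropWhile)

lemma nodes_snoc_hd: "r \<noteq> [] \<Longrightarrow> nodes (r @ [hd r]) = zip r (rotate1 r)"
  using nodes_append[of r "[hd r]"] by (simp add: zip_rotate1 nodes_Cons)

lemma arrow_loop_Lp:
  assumes "cyc T r" "\<delta> < 1" "0 \<le> \<delta>"
  shows "arrow_loop T m \<epsilon> \<delta> (Lp T r) = - loopw T m \<epsilon> \<delta> r"
proof -
  have ex: "\<exists>c. c \<in> Lp T r" using Lp_eq[OF assms(1)] by blast
  have "\<And>c. c \<in> Lp T r \<Longrightarrow> arrow_unsigned T m \<epsilon> \<delta> c = loopw T m \<epsilon> \<delta> r"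
  proof -
    fix c assume "c \<in> Lp T r"
    then obtain n where c: "c = rotate n r @ [hd (rotate n r)]" using Lp_eq[OF assms(1)] by auto
    have ne: "rotate n r \<noteq> []" using assms(1) by (auto simp: cyc_def)
    have "arrow_unsigned T m \<epsilon> \<delta> c = loopw T m \<epsilon> \<delta> (rotate n r)"
      unfolding AU[OF assms(2,3)] c nodes_snoc_hd[OF ne] loopw_def ..
    then show "arrow_unsigned T m \<epsilon> \<delta> c = loopw T m \<epsilon> \<delta> r" by (simp add: loopw_rotate)
  qed
  then show ?thesis unfolding arrow_loop_def using someI_ex[OF ex] by simp
qed



definition ledges :: "edge list set set \<Rightarrow> edge set" where
  "ledges S = \<Union> (loop_edges ` S)"

lemma finite_E: "finite (lattice_edges T)"
proof -
  have "lattice_edges T \<subseteq> {..<2*T} \<times> {..<2*T} \<times> UNIV" by (auto simp: lattice_edges_def)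
  then show ?thesis by (rule finite_subset) auto
qed

lemma finite_paths: "finite {p. is_path T p}"
proof -
  have "{p. is_path T p} \<subseteq> {xs. set xs \<subseteq> lattice_edges T \<and> length xs \<le> card (lattice_edges T)}"
  proof
    fix p assume "p \<in> {p. is_path T p}"
    then have "set p \<subseteq> lattice_edges T" "distinct p" by (auto simp: is_path_def)
    moreover have "length p = card (set p)" using calculation(2) by (simp add: distinct_card)
    moreover have "card (set p) \<le> card (lattice_edges T)" using calculation(1) by (rule card_mono[OF finite_E])
    ultimately show "p \<in> {xs. set xs \<subseteq> lattice_edges T \<and> length xs \<le> card (lattice_edges T)}"
      by simp
  qed
  then show ?thesis by (rule finite_subset) (simp add: finite_lists_length_le finite_E)
qed

lemma finite_cycles: "finite {c. is_cycle T c}"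
proof -
  have "{c. is_cycle T c} \<subseteq> {xs. set xs \<subseteq> lattice_edges T \<and> length xs \<le> card (lattice_edges T) + 1}"
  proof
    fix c assume "c \<in> {c. is_cycle T c}"
    then obtain r where r: "cyc T r" "c = r @ [hd r]" by (auto simp: is_cycle_iff)
    then have "set r \<subseteq> lattice_edges T" "distinct r" "r \<noteq> []" by (auto simp: cyc_def)
    moreover have "length r = card (set r)" using calculation(2) by (simp add: distinct_card)
    moreover have "card (set r) \<le> card (lattice_edges T)" using calculation(1) by (rule card_mono[OF finite_E])
    ultimately show "c \<in> {xs. set xs \<subseteq> lattice_edges T \<and> length xs \<le> card (lattice_edges T) + 1}"
      using r by auto
  qed
  then show ?thesis by (rule finite_subset) (simp add: finite_lists_length_le finite_E)
qed

lemma finite_loops: "finite (loops T)"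
proof -
  have "loops T \<subseteq> Pow {c. is_cycle T c}" by (auto simp: loops_def)
  then show ?thesis using finite_cycles[of T] by (meson finite_Pow_iff finite_subset)
qed

lemma finite_LC: "finite (loop_configs T)"
proof -
  have "loop_configs T \<subseteq> Pow (loops T)" by (auto simp: loop_configs_def)
  then show ?thesis using finite_loops[of T] by (meson finite_Pow_iff finite_subset)
qed

lemma finite_config: "S \<in> loop_configs T \<Longrightarrow> finite S"
  using finite_loops by (auto simp: loop_configs_def intro: finite_subset)

lemma loopsD: "L \<in> loops T \<Longrightarrow> \<exists>r. cyc T r \<and> L = Lp T r"
  by (auto simp: loops_eq)

lemma Lp_in_loops: "cyc T r \<Longrightarrow> Lp T r \<in> loops T"
  by (auto simp: loops_eq)

lemma LC_disj: "S \<in> loop_configs T \<Longrightarrow> L1 \<in> S \<Longrightarrow> L2 \<in> S \<Longrightarrow> L1 \<noteq> L2 \<Longrightarrow>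
  loop_edges L1 \<inter> loop_edges L2 = {}"
  by (auto simp: loop_configs_def)

lemma hd_in_cyc: "cyc T r \<Longrightarrow> hd r \<in> set r"
  by (cases r) (auto simp: cyc_def)

lemma exists_rot:
  assumes "S \<in> loop_configs T" "f \<in> ledges S"
  shows "\<exists>r. cyc T r \<and> Lp T r \<in> S \<and> hd r = f"
proof -
  obtain L where L: "L \<in> S" "f \<in> loop_edges L" using assms(2) by (auto simp: ledges_def)
  then have "L \<in> loops T" using assms(1) by (auto simp: loop_configs_def)
  then obtain r0 where r0: "cyc T r0" "L = Lp T r0" using loopsD by blast
  have f: "f \<in> set r0" using L r0 loop_edges_Lp by auto
  let ?r = "rotf f r0"
  have eq: "?r = rotate (length (takeWhile (\<lambda>x. x \<noteq> f) r0)) r0" by (rule rotf_rotate)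
  have c: "cyc T ?r" unfolding eq by (rule cyc_rotate[OF r0(1)])
  have l: "Lp T ?r = L" unfolding eq Lp_rotate[OF r0(1)] r0(2) ..
  have h: "hd ?r = f" using hd_rotf[OF f] .
  show ?thesis using c l h L(1) by blast
qed

lemma unique_rot:
  assumes "S \<in> loop_configs T" "cyc T r1" "Lp T r1 \<in> S" "hd r1 = f"
    "cyc T r2" "Lp T r2 \<in> S" "hd r2 = f"
  shows "r1 = r2"
proof -
  have "f \<in> loop_edges (Lp T r1)"
    unfolding loop_edges_Lp[OF assms(2)] using hd_in_cyc[OF assms(2)] assms(4) by simp
  moreover have "f \<in> loop_edges (Lp T r2)"
    unfolding loop_edges_Lp[OF assms(5)] using hd_in_cyc[OF assms(5)] assms(7) by simp
  ultimately have "Lp T r1 = Lp T r2" using LC_disj[OF assms(1,3,6)] by blast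
  then show ?thesis using Lp_inj_hd[OF assms(2,5)] assms(4,7) by simp
qed

lemma end_ne_start:
  assumes "T > 0" "e \<in> lattice_edges T" shows "edge_end T e \<noteq> edge_start e"
proof -
  obtain x y d where e: "e = (x, y, d)" by (cases e)
  have "y < 2 * T" using assms e by (simp add: lattice_edges_def)
  have "(y + 1) mod (2 * T) \<noteq> y"
  proof (cases "y + 1 < 2 * T")
    case True then show ?thesis by simp
  next
    case False
    then have "y + 1 = 2 * T" using \<open>y < 2 * T\<close> by simp
    then have "(y + 1) mod (2 * T) = 0" by simp
    moreover have "y \<noteq> 0" using \<open>y + 1 = 2 * T\<close> assms(1) by linarith
    ultimately show ?thesis by simp
  qed
  then show ?thesis using e by (simp add: edge_end_def edge_start_def)
qed



definition SPa :: "nat \<Rightarrow> edge \<Rightarrow> (edge list set set \<times> edge list) set" where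
  "SPa T a = {(S, p). S \<in> loop_configs T \<and> is_path T p \<and> hd p = a \<and> ledges S \<inter> set p = {}}"

definition C2set :: "nat \<Rightarrow> edge \<Rightarrow> edge \<Rightarrow> (edge list set set \<times> edge list) set" where
  "C2set T a f = {(S, p). (S, p) \<in> SPa T a \<and> f \<in> set p \<and> edge_end T (last p) = edge_start f}"

definition Qset :: "nat \<Rightarrow> edge \<Rightarrow> edge \<Rightarrow> (edge list set set \<times> edge list) set" where
  "Qset T a f = {(S, q). S \<in> loop_configs T \<and> f \<in> ledges S \<and> ledges S \<inter> set q = {} \<and>
     ((q = [] \<and> f = a) \<or> (is_path T q \<and> hd q = a \<and> edge_end T (last q) = edge_start f))}"

definition iF :: "nat \<Rightarrow> edge \<Rightarrow> edge list set set \<times> edge list \<Rightarrow> edge list set set \<times> edge list" where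
  "iF T f x = (case x of (S, p) \<Rightarrow>
     (insert (Lp T (dropWhile (\<lambda>x. x \<noteq> f) p)) S, takeWhile (\<lambda>x. x \<noteq> f) p))"

definition rsel :: "nat \<Rightarrow> edge \<Rightarrow> edge list set set \<Rightarrow> edge list" where
  "rsel T f S = (SOME r. cyc T r \<and> Lp T r \<in> S \<and> hd r = f)"

definition jF :: "nat \<Rightarrow> edge \<Rightarrow> edge list set set \<times> edge list \<Rightarrow> edge list set set \<times> edge list" where
  "jF T f y = (case y of (S, q) \<Rightarrow> (S - {Lp T (rsel T f S)}, q @ rsel T f S))"

lemma ledges_insert: "ledges (insert L S) = loop_edges L \<union> ledges S"
  by (auto simp: ledges_def)

lemma ledges_mono: "L \<in> S \<Longrightarrow> loop_edges L \<subseteq> ledges S"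
  by (auto simp: ledges_def)

lemma ledges_Diff: "ledges (S - X) \<subseteq> ledges S"
  by (auto simp: ledges_def)

lemma LC_Diff: "S \<in> loop_configs T \<Longrightarrow> S - X \<in> loop_configs T"
  by (auto simp: loop_configs_def)

lemma LC_insert:
  assumes "S \<in> loop_configs T" "cyc T r" "ledges S \<inter> set r = {}"
  shows "insert (Lp T r) S \<in> loop_configs T"
proof -
  have le: "loop_edges (Lp T r) = set r" by (rule loop_edges_Lp[OF assms(2)])
  have "\<And>L. L \<in> S \<Longrightarrow> loop_edges L \<inter> set r = {}" using assms(3) ledges_mono by blast
  then show ?thesis using assms(1) Lp_in_loops[OF assms(2)] le
    unfolding loop_configs_def by auto
qed

lemma rsel:
  assumes "S \<in> loop_configs T" "f \<in> ledges S"
  shows "cyc T (rsel T f S)" "Lp T (rsel T f S) \<in> S" "hd (rsel T f S) = f"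
  using someI_ex[OF exists_rot[OF assms]] unfolding rsel_def by blast+

lemma rsel_eq:
  assumes "S \<in> loop_configs T" "cyc T r" "Lp T r \<in> S" "hd r = f"
  shows "rsel T f S = r"
proof -
  have "f \<in> loop_edges (Lp T r)" using loop_edges_Lp[OF assms(2)] hd_in_cyc[OF assms(2)] assms(4) by simp
  then have fl: "f \<in> ledges S" using ledges_mono[OF assms(3)] by blast
  show ?thesis using unique_rot[OF assms(1) rsel[OF assms(1) fl] assms(2-4)] .
qed

lemma path_split_facts:
  assumes "is_path T p" "f \<in> set p" "edge_end T (last p) = edge_start f"
    "T > 0" "f \<in> lattice_edges T"
  defines "tw \<equiv> takeWhile (\<lambda>x. x \<noteq> f) p" and "r \<equiv> dropWhile (\<lambda>x. x \<noteq> f) p"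
  shows "p = tw @ r" "r \<noteq> []" "hd r = f" "f \<notin> set tw" "cyc T r" "last r = last p"
    "set tw \<inter> set r = {}" "tw \<noteq> [] \<Longrightarrow> is_path T tw"
    "tw \<noteq> [] \<Longrightarrow> edge_end T (last tw) = edge_start f" "tw \<noteq> [] \<Longrightarrow> hd tw = hd p"
    "tw = [] \<Longrightarrow> hd p = f"
proof -
  show p: "p = tw @ r" unfolding tw_def r_def by (rule takeWhile_dropWhile_id[symmetric])
  show rne: "r \<noteq> []" unfolding r_def using assms(2) by simp
  show hr: "hd r = f" unfolding r_def using hd_dropWhile[OF rne[unfolded r_def]] by simp
  show "f \<notin> set tw" unfolding tw_def using set_takeWhileD by force
  show lr: "last r = last p" using rne by (subst p) (rule last_appendR[symmetric])
  have d: "distinct p" and ch: "chained T p" and sE: "set p \<subseteq> lattice_edges T"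
    using assms(1) by (auto simp: is_path_def)
  have dr: "distinct r" "distinct tw" and dj: "set tw \<inter> set r = {}" using d p
    by (metis distinct_append)+
  then show "set tw \<inter> set r = {}" by simp
  have chs: "chained T tw" "chained T r" "tw \<noteq> [] \<Longrightarrow> edge_end T (last tw) = edge_start (hd r)"
    using ch p rne chained_append[of T tw r] by auto
  then show "tw \<noteq> [] \<Longrightarrow> edge_end T (last tw) = edge_start f" using hr by simp
  have len: "2 \<le> length r"
  proof (rule ccontr)
    assume "\<not> 2 \<le> length r"
    moreover have "length r \<noteq> 0" using rne by simp
    ultimately have "length r = 1" by linarith
    then have "r = [f]" using hr by (cases r) auto
    then have "last p = f" using lr by simp
    then show False using assms(3) end_ne_start[OF assms(4,5)] by simp
  qed
  have "chained T (r @ [hd r])" using chs(2) rne lr assms(3) hr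
    by (simp add: chained_append chained_Cons)
  moreover have "set r \<subseteq> lattice_edges T" using sE p by auto
  ultimately show "cyc T r" using len dr by (simp add: cyc_def)
  show "tw \<noteq> [] \<Longrightarrow> is_path T tw" using dr chs sE p by (auto simp: is_path_def)
  show "tw \<noteq> [] \<Longrightarrow> hd tw = hd p" using p by simp
  show "tw = [] \<Longrightarrow> hd p = f" using p hr by simp
qed


lemma ledges_disj_iff: "ledges S \<inter> X = {} \<longleftrightarrow> (\<forall>L\<in>S. loop_edges L \<inter> X = {})"
  by (auto simp: ledges_def)

lemma iF_in_Q:
  assumes "x \<in> C2set T a f" "T > 0" "f \<in> lattice_edges T"
  shows "iF T f x \<in> Qset T a f"
proof -
  obtain S p where x: "x = (S, p)" by (cases x)
  have S: "S \<in> loop_configs T" and pp: "is_path T p" and hp: "hd p = a"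
    and dj: "ledges S \<inter> set p = {}" and fp: "f \<in> set p" and adj: "edge_end T (last p) = edge_start f"
    using assms(1) x by (auto simp: C2set_def SPa_def)
  define tw where "tw = takeWhile (\<lambda>x. x \<noteq> f) p"
  define r where "r = dropWhile (\<lambda>x. x \<noteq> f) p"
  note F = path_split_facts[OF pp fp adj assms(2,3), folded tw_def r_def]
  have ix: "iF T f x = (insert (Lp T r) S, tw)" by (simp add: iF_def x tw_def r_def)
  have djr: "ledges S \<inter> set r = {}" using dj F(1) by auto
  have LC: "insert (Lp T r) S \<in> loop_configs T" by (rule LC_insert[OF S F(5) djr])
  have le: "loop_edges (Lp T r) = set r" by (rule loop_edges_Lp[OF F(5)])
  have fin: "f \<in> ledges (insert (Lp T r) S)" using le hd_in_set[OF F(2)] F(3) by (simp add: ledges_insert)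
  have djt: "ledges (insert (Lp T r) S) \<inter> set tw = {}" using le F(7) dj F(1) by (auto simp: ledges_insert)
  have last: "(tw = [] \<and> f = a) \<or> (is_path T tw \<and> hd tw = a \<and> edge_end T (last tw) = edge_start f)"
    using F(8-11) hp by auto
  show ?thesis unfolding ix Qset_def using LC fin djt last by simp
qed

lemma jF_in_C2:
  assumes "y \<in> Qset T a f"
  shows "jF T f y \<in> C2set T a f"
proof -
  obtain S q where y: "y = (S, q)" by (cases y)
  have S: "S \<in> loop_configs T" and fS: "f \<in> ledges S" and dj: "ledges S \<inter> set q = {}"
    and qc: "(q = [] \<and> f = a) \<or> (is_path T q \<and> hd q = a \<and> edge_end T (last q) = edge_start f)"
    using assms y by (auto simp: Qset_def)
  define r where "r = rsel T f S"
  have r: "cyc T r" "Lp T r \<in> S" "hd r = f" using rsel[OF S fS] by (simp_all add: r_def)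
  have jy: "jF T f y = (S - {Lp T r}, q @ r)" by (simp add: jF_def y r_def)
  have le: "loop_edges (Lp T r) = set r" by (rule loop_edges_Lp[OF r(1)])
  have rsub: "set r \<subseteq> ledges S" using le ledges_mono[OF r(2)] by simp
  have djqr: "set q \<inter> set r = {}" using dj rsub by blast
  have rne: "r \<noteq> []" and dr: "distinct r" and rE: "set r \<subseteq> lattice_edges T"
    and chr0: "chained T (r @ [hd r])" using r(1) by (auto simp: cyc_def)
  have chr: "chained T r" and lastr: "edge_end T (last r) = edge_start f"
    using chr0 rne r(3) chained_append[of T r "[hd r]"] by auto
  have path: "is_path T (q @ r)"
  proof (cases "q = []")
    case True then show ?thesis using rne dr rE chr by (simp add: is_path_def)
  next
    case False
    then have q: "is_path T q" "edge_end T (last q) = edge_start f" using qc by auto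
    then show ?thesis using rne dr rE chr djqr r(3) False
      by (auto simp: is_path_def chained_append)
  qed
  have hd: "hd (q @ r) = a" using qc r(3) by (cases "q = []") (auto simp: is_path_def)
  have S': "S - {Lp T r} \<in> loop_configs T" by (rule LC_Diff[OF S])
  have dj': "ledges (S - {Lp T r}) \<inter> set (q @ r) = {}"
  proof -
    have "\<And>L. L \<in> S - {Lp T r} \<Longrightarrow> loop_edges L \<inter> set r = {}"
      using LC_disj[OF S _ r(2)] le by blast
    moreover have "\<And>L. L \<in> S - {Lp T r} \<Longrightarrow> loop_edges L \<inter> set q = {}"
      using dj ledges_mono by blast
    ultimately show ?thesis by (auto simp: ledges_def)
  qed
  have fp: "f \<in> set (q @ r)" using r(3) hd_in_set[OF rne] by simp
  have adj: "edge_end T (last (q @ r)) = edge_start f" using lastr rne by simp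
  show ?thesis unfolding jy C2set_def SPa_def using S' path hd dj' fp adj by simp
qed

lemma jF_iF:
  assumes "x \<in> C2set T a f" "T > 0" "f \<in> lattice_edges T"
  shows "jF T f (iF T f x) = x"
proof -
  obtain S p where x: "x = (S, p)" by (cases x)
  have S: "S \<in> loop_configs T" and pp: "is_path T p"
    and dj: "ledges S \<inter> set p = {}" and fp: "f \<in> set p" and adj: "edge_end T (last p) = edge_start f"
    using assms(1) x by (auto simp: C2set_def SPa_def)
  define tw where "tw = takeWhile (\<lambda>x. x \<noteq> f) p"
  define r where "r = dropWhile (\<lambda>x. x \<noteq> f) p"
  note F = path_split_facts[OF pp fp adj assms(2,3), folded tw_def r_def]
  have ix: "iF T f x = (insert (Lp T r) S, tw)" by (simp add: iF_def x tw_def r_def)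
  have djr: "ledges S \<inter> set r = {}" using dj F(1) by auto
  have LC: "insert (Lp T r) S \<in> loop_configs T" by (rule LC_insert[OF S F(5) djr])
  have rs: "rsel T f (insert (Lp T r) S) = r" by (rule rsel_eq[OF LC F(5) _ F(3)]) simp
  have nin: "Lp T r \<notin> S"
  proof
    assume "Lp T r \<in> S"
    then have "set r \<subseteq> ledges S" using ledges_mono loop_edges_Lp[OF F(5)] by metis
    then show False using djr F(2) by (metis Int_absorb1 set_empty)
  qed
  show ?thesis unfolding ix jF_def using rs nin F(1) x by simp
qed

lemma iF_jF:
  assumes "y \<in> Qset T a f"
  shows "iF T f (jF T f y) = y"
proof -
  obtain S q where y: "y = (S, q)" by (cases y)
  have S: "S \<in> loop_configs T" and fS: "f \<in> ledges S" and dj: "ledges S \<inter> set q = {}"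
    using assms y by (auto simp: Qset_def)
  define r where "r = rsel T f S"
  have r: "cyc T r" "Lp T r \<in> S" "hd r = f" using rsel[OF S fS] by (simp_all add: r_def)
  have jy: "jF T f y = (S - {Lp T r}, q @ r)" by (simp add: jF_def y r_def)
  have le: "loop_edges (Lp T r) = set r" by (rule loop_edges_Lp[OF r(1)])
  have rne: "r \<noteq> []" using r(1) by (auto simp: cyc_def)
  then obtain rest where rr: "r = f # rest" using r(3) by (cases r) auto
  have fq: "f \<notin> set q" using dj fS by blast
  have tw: "takeWhile (\<lambda>x. x \<noteq> f) (q @ r) = q" using fq rr by (auto simp: takeWhile_append)
  have dw: "dropWhile (\<lambda>x. x \<noteq> f) (q @ r) = r" using fq rr by (auto simp: dropWhile_append)
  have "iF T f (jF T f y) = (insert (Lp T r) (S - {Lp T r}), q)"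
    unfolding jy iF_def using tw dw by simp
  then show ?thesis using r(2) y by (simp add: insert_absorb)
qed

lemma arrow_config_insert:
  "finite S \<Longrightarrow> L \<notin> S \<Longrightarrow> arrow_config T m \<epsilon> \<delta> (insert L S) = arrow_loop T m \<epsilon> \<delta> L * arrow_config T m \<epsilon> \<delta> S"
  by (simp add: arrow_config_def)

lemma weight_iF:
  assumes "x \<in> C2set T a f" "T > 0" "f \<in> lattice_edges T" "\<delta> < 1" "0 \<le> \<delta>"
  shows "(case iF T f x of (S, q) \<Rightarrow> arrow_config T m \<epsilon> \<delta> S *
            (if q = [] then 1 else pathw T m \<epsilon> \<delta> q * nw T m \<epsilon> \<delta> (last q, f)))
       = - (case x of (S, p) \<Rightarrow> arrow_config T m \<epsilon> \<delta> S * pathw T m \<epsilon> \<delta> p * nw T m \<epsilon> \<delta> (last p, f))"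
proof -
  obtain S p where x: "x = (S, p)" by (cases x)
  have S: "S \<in> loop_configs T" and pp: "is_path T p"
    and dj: "ledges S \<inter> set p = {}" and fp: "f \<in> set p" and adj: "edge_end T (last p) = edge_start f"
    using assms(1) x by (auto simp: C2set_def SPa_def)
  define tw where "tw = takeWhile (\<lambda>x. x \<noteq> f) p"
  define r where "r = dropWhile (\<lambda>x. x \<noteq> f) p"
  note F = path_split_facts[OF pp fp adj assms(2,3), folded tw_def r_def]
  have ix: "iF T f x = (insert (Lp T r) S, tw)" by (simp add: iF_def x tw_def r_def)
  have djr: "ledges S \<inter> set r = {}" using dj F(1) by auto
  have nin: "Lp T r \<notin> S"
  proof
    assume "Lp T r \<in> S"
    then have "set r \<subseteq> ledges S" using ledges_mono loop_edges_Lp[OF F(5)] by metis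
    then show False using djr F(2) by (metis Int_absorb1 set_empty)
  qed
  have ac: "arrow_config T m \<epsilon> \<delta> (insert (Lp T r) S)
      = - (pathw T m \<epsilon> \<delta> r * nw T m \<epsilon> \<delta> (last r, f)) * arrow_config T m \<epsilon> \<delta> S"
    using arrow_config_insert[OF finite_config[OF S] nin] arrow_loop_Lp[OF F(5) assms(4,5)]
      loopw_pathw[OF F(2)] F(3) by simp
  have ix': "iF T f (S, p) = (insert (Lp T r) S, tw)" using ix x by simp
  show ?thesis
  proof (cases "tw = []")
    case True
    then have "p = r" using F(1) by simp
    then show ?thesis unfolding x ix' using ac True by simp
  next
    case False
    have pw: "pathw T m \<epsilon> \<delta> p = pathw T m \<epsilon> \<delta> tw * nw T m \<epsilon> \<delta> (last tw, f) * pathw T m \<epsilon> \<delta> r"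
      using pathw_append[OF False F(2)] F(1,3) by simp
    show ?thesis unfolding x ix' using ac False pw F(6) by (simp add: algebra_simps)
  qed
qed

lemma C2_Q_sum:
  assumes "T > 0" "f \<in> lattice_edges T" "\<delta> < 1" "0 \<le> \<delta>"
  shows "(\<Sum>(S, p)\<in>C2set T a f. arrow_config T m \<epsilon> \<delta> S * pathw T m \<epsilon> \<delta> p * nw T m \<epsilon> \<delta> (last p, f))
       = - (\<Sum>(S, q)\<in>Qset T a f. arrow_config T m \<epsilon> \<delta> S *
            (if q = [] then 1 else pathw T m \<epsilon> \<delta> q * nw T m \<epsilon> \<delta> (last q, f)))"
proof -
  have "(\<Sum>x\<in>C2set T a f. (case x of (S, p) \<Rightarrow> arrow_config T m \<epsilon> \<delta> S * pathw T m \<epsilon> \<delta> p * nw T m \<epsilon> \<delta> (last p, f)))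
      = (\<Sum>y\<in>Qset T a f. - (case y of (S, q) \<Rightarrow> arrow_config T m \<epsilon> \<delta> S *
            (if q = [] then 1 else pathw T m \<epsilon> \<delta> q * nw T m \<epsilon> \<delta> (last q, f))))"
  proof (rule sum.reindex_bij_witness[where i = "jF T f" and j = "iF T f"])
    fix x assume "x \<in> C2set T a f"
    then show "jF T f (iF T f x) = x" "iF T f x \<in> Qset T a f"
      using jF_iF iF_in_Q assms by blast+
    show "- (case iF T f x of (S, q) \<Rightarrow> arrow_config T m \<epsilon> \<delta> S *
            (if q = [] then 1 else pathw T m \<epsilon> \<delta> q * nw T m \<epsilon> \<delta> (last q, f)))
        = (case x of (S, p) \<Rightarrow> arrow_config T m \<epsilon> \<delta> S * pathw T m \<epsilon> \<delta> p * nw T m \<epsilon> \<delta> (last p, f))"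
      using weight_iF[OF \<open>x \<in> C2set T a f\<close> assms] by simp
  next
    fix y assume "y \<in> Qset T a f"
    then show "iF T f (jF T f y) = y" "jF T f y \<in> C2set T a f"
      using iF_jF jF_in_C2 by blast+
  qed
  then show ?thesis by (simp add: sum_negf)
qed



definition Uw :: "nat \<Rightarrow> real \<Rightarrow> real \<Rightarrow> real \<Rightarrow> edge \<Rightarrow> edge \<Rightarrow> complex" where
  "Uw T m \<epsilon> \<delta> e e' = (if edge_end T e = edge_start e' then nw T m \<epsilon> \<delta> (e, e') else 0)"

definition Num :: "nat \<Rightarrow> real \<Rightarrow> real \<Rightarrow> real \<Rightarrow> edge \<Rightarrow> edge \<Rightarrow> complex" where
  "Num T m \<epsilon> \<delta> a e = (\<Sum>(S, p)\<in>source_sink_configs T a e. arrow_config T m \<epsilon> \<delta> S * arrow_path T m \<epsilon> \<delta> p)"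

definition Zs :: "nat \<Rightarrow> real \<Rightarrow> real \<Rightarrow> real \<Rightarrow> complex" where
  "Zs T m \<epsilon> \<delta> = (\<Sum>S\<in>loop_configs T. arrow_config T m \<epsilon> \<delta> S)"

lemma propagator_eq: "propagator a f m \<epsilon> \<delta> T = Num T m \<epsilon> \<delta> a f / Zs T m \<epsilon> \<delta>"
  by (simp add: propagator_def Num_def Zs_def)

lemma finite_SPa: "finite (SPa T a)"
proof -
  have "SPa T a \<subseteq> loop_configs T \<times> {p. is_path T p}" by (auto simp: SPa_def)
  then show ?thesis using finite_LC finite_paths by (meson finite_SigmaI finite_subset)
qed

lemma ssc_eq: "source_sink_configs T a e = {x \<in> SPa T a. last (snd x) = e}"
  by (auto simp: source_sink_configs_def SPa_def ledges_disj_iff)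

lemma path_last_in: "is_path T p \<Longrightarrow> last p \<in> lattice_edges T"
  by (auto simp: is_path_def)

lemma distinct_hd_last: "distinct p \<Longrightarrow> p \<noteq> [] \<Longrightarrow> hd p = last p \<Longrightarrow> p = [hd p]"
proof (cases p)
  case (Cons x xs)
  assume d: "distinct p" and h: "hd p = last p"
  show ?thesis
  proof (cases "xs = []")
    case False
    then have "last p \<in> set xs" using Cons by simp
    then show ?thesis using d h Cons by simp
  qed (simp add: Cons)
qed simp

context
  fixes T :: nat and m \<epsilon> \<delta> :: real
  assumes T0: "0 < T" and d1: "\<delta> < 1" and d0: "0 \<le> \<delta>"
begin

abbreviation "AC \<equiv> arrow_config T m \<epsilon> \<delta>"
abbreviation "PW \<equiv> pathw T m \<epsilon> \<delta>"
abbreviation "NW \<equiv> nw T m \<epsilon> \<delta>"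

lemma lhs_SPa:
  assumes "f \<in> lattice_edges T"
  shows "(\<Sum>e\<in>lattice_edges T. Num T m \<epsilon> \<delta> a e * Uw T m \<epsilon> \<delta> e f)
       = (\<Sum>x\<in>SPa T a. AC (fst x) * PW (snd x) * Uw T m \<epsilon> \<delta> (last (snd x)) f)"
proof -
  have "(\<Sum>e\<in>lattice_edges T. Num T m \<epsilon> \<delta> a e * Uw T m \<epsilon> \<delta> e f)
      = (\<Sum>e\<in>lattice_edges T. \<Sum>x\<in>{x \<in> SPa T a. last (snd x) = e}.
            AC (fst x) * PW (snd x) * Uw T m \<epsilon> \<delta> (last (snd x)) f)"
  proof (rule sum.cong[OF refl])
    fix e assume "e \<in> lattice_edges T"
    show "Num T m \<epsilon> \<delta> a e * Uw T m \<epsilon> \<delta> e f = (\<Sum>x\<in>{x \<in> SPa T a. last (snd x) = e}.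
            AC (fst x) * PW (snd x) * Uw T m \<epsilon> \<delta> (last (snd x)) f)"
      unfolding Num_def ssc_eq sum_distrib_right
      by (rule sum.cong[OF refl]) (auto simp: arrow_path_pathw[OF d1 d0] split_beta)
  qed
  also have "\<dots> = (\<Sum>x\<in>SPa T a. AC (fst x) * PW (snd x) * Uw T m \<epsilon> \<delta> (last (snd x)) f)"
  proof (rule sum.group[OF finite_SPa finite_E])
    show "(\<lambda>x. last (snd x)) ` SPa T a \<subseteq> lattice_edges T"
      using path_last_in by (auto simp: SPa_def)
  qed
  finally show ?thesis .
qed

lemma Q_eq_self:
  "Qset T a a = (\<lambda>S. (S, [])) ` {S \<in> loop_configs T. a \<in> ledges S}"
proof (intro equalityI subsetI)
  fix y assume y: "y \<in> Qset T a a"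
  obtain S q where yy: "y = (S, q)" by (cases y)
  have "q = []"
  proof (rule ccontr)
    assume "q \<noteq> []"
    then have "hd q = a" using y yy by (auto simp: Qset_def)
    then have "a \<in> set q" using \<open>q \<noteq> []\<close> hd_in_set by metis
    then show False using y yy by (auto simp: Qset_def)
  qed
  then show "y \<in> (\<lambda>S. (S, [])) ` {S \<in> loop_configs T. a \<in> ledges S}" using y yy by (auto simp: Qset_def)
qed (auto simp: Qset_def)

lemma ssc_self:
  assumes aE: "a \<in> lattice_edges T"
  shows "source_sink_configs T a a = (\<lambda>S. (S, [a])) ` {S \<in> loop_configs T. a \<notin> ledges S}"
proof (intro equalityI subsetI)
  fix x assume x: "x \<in> source_sink_configs T a a"
  obtain S p where xx: "x = (S, p)" by (cases x)
  have "is_path T p" "hd p = a" "last p = a" using x xx by (auto simp: source_sink_configs_def)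
  then have "p = [a]" using distinct_hd_last[of p] by (auto simp: is_path_def)
  then show "x \<in> (\<lambda>S. (S, [a])) ` {S \<in> loop_configs T. a \<notin> ledges S}"
    using x xx by (auto simp: source_sink_configs_def ledges_def)
next
  fix x assume "x \<in> (\<lambda>S. (S, [a])) ` {S \<in> loop_configs T. a \<notin> ledges S}"
  then obtain S where "x = (S, [a])" "S \<in> loop_configs T" "a \<notin> ledges S" by auto
  moreover have "is_path T [a]" using aE by (simp add: is_path_def chained_def)
  ultimately show "x \<in> source_sink_configs T a a"
    by (auto simp: source_sink_configs_def ledges_def)
qed


lemma sum_P2:
  assumes fE: "f \<in> lattice_edges T"
  shows "(\<Sum>x\<in>SPa T a \<inter> {x. f \<in> set (snd x)}. AC (fst x) * PW (snd x) * Uw T m \<epsilon> \<delta> (last (snd x)) f)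
       = - (\<Sum>(S, q)\<in>Qset T a f. AC S * (if q = [] then 1 else PW q * NW (last q, f)))"
proof -
  have "(\<Sum>x\<in>SPa T a \<inter> {x. f \<in> set (snd x)}. AC (fst x) * PW (snd x) * Uw T m \<epsilon> \<delta> (last (snd x)) f)
      = (\<Sum>x\<in>C2set T a f. (case x of (S, p) \<Rightarrow> AC S * PW p * NW (last p, f)))"
  proof (rule sum.mono_neutral_cong_right)
    show "finite (SPa T a \<inter> {x. f \<in> set (snd x)})" using finite_SPa by simp
    show "C2set T a f \<subseteq> SPa T a \<inter> {x. f \<in> set (snd x)}" by (auto simp: C2set_def)
    show "\<forall>i\<in>SPa T a \<inter> {x. f \<in> set (snd x)} - C2set T a f.
            AC (fst i) * PW (snd i) * Uw T m \<epsilon> \<delta> (last (snd i)) f = 0"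
      by (auto simp: C2set_def Uw_def)
    show "\<And>x. x \<in> C2set T a f \<Longrightarrow> AC (fst x) * PW (snd x) * Uw T m \<epsilon> \<delta> (last (snd x)) f
            = (case x of (S, p) \<Rightarrow> AC S * PW p * NW (last p, f))"
      by (auto simp: C2set_def Uw_def)
  qed
  also have "\<dots> = - (\<Sum>(S, q)\<in>Qset T a f. AC S * (if q = [] then 1 else PW q * NW (last q, f)))"
    by (rule C2_Q_sum[OF T0 fE d1 d0])
  finally show ?thesis .
qed

lemma CL_self:
  assumes aE: "a \<in> lattice_edges T"
  shows "(\<Sum>e\<in>lattice_edges T. Num T m \<epsilon> \<delta> a e * Uw T m \<epsilon> \<delta> e a) = Num T m \<epsilon> \<delta> a a - Zs T m \<epsilon> \<delta>"
proof -
  have sp: "SPa T a \<inter> {x. a \<in> set (snd x)} = SPa T a"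
    by (auto simp: SPa_def is_path_def hd_in_set)
  have inj1: "inj_on (\<lambda>S. (S, [])) X" for X :: "edge list set set set" by (rule inj_onI) simp
  have inj2: "inj_on (\<lambda>S. (S, [a])) X" for X :: "edge list set set set" by (rule inj_onI) simp
  have "(\<Sum>e\<in>lattice_edges T. Num T m \<epsilon> \<delta> a e * Uw T m \<epsilon> \<delta> e a)
      = - (\<Sum>(S, q)\<in>Qset T a a. AC S * (if q = [] then 1 else PW q * NW (last q, a)))"
    unfolding lhs_SPa[OF aE, where a=a] sum_P2[OF aE, where a=a, symmetric] sp ..
  also have "\<dots> = - (\<Sum>S\<in>{S \<in> loop_configs T. a \<in> ledges S}. AC S)"
    unfolding Q_eq_self sum.reindex[OF inj1] by simp
  finally have l: "(\<Sum>e\<in>lattice_edges T. Num T m \<epsilon> \<delta> a e * Uw T m \<epsilon> \<delta> e a)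
      = - (\<Sum>S\<in>{S \<in> loop_configs T. a \<in> ledges S}. AC S)" .
  have n: "Num T m \<epsilon> \<delta> a a = (\<Sum>S\<in>{S \<in> loop_configs T. a \<notin> ledges S}. AC S)"
    unfolding Num_def ssc_self[OF aE] sum.reindex[OF inj2]
    by (simp add: arrow_path_pathw[OF d1 d0])
  have z: "Zs T m \<epsilon> \<delta> = (\<Sum>S\<in>{S \<in> loop_configs T. a \<in> ledges S}. AC S)
                       + (\<Sum>S\<in>{S \<in> loop_configs T. a \<notin> ledges S}. AC S)"
  proof -
    have "Zs T m \<epsilon> \<delta> = (\<Sum>S\<in>loop_configs T \<inter> {S. a \<in> ledges S}. AC S)
                      + (\<Sum>S\<in>loop_configs T - {S. a \<in> ledges S}. AC S)"
      unfolding Zs_def by (rule sum.Int_Diff[OF finite_LC])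
    moreover have "loop_configs T \<inter> {S. a \<in> ledges S} = {S \<in> loop_configs T. a \<in> ledges S}" by auto
    moreover have "loop_configs T - {S. a \<in> ledges S} = {S \<in> loop_configs T. a \<notin> ledges S}" by auto
    ultimately show ?thesis by simp
  qed
  show ?thesis using l n z by simp
qed


lemma sum_P3:
  assumes fE: "f \<in> lattice_edges T" and af: "a \<noteq> f"
  shows "(\<Sum>x\<in>(SPa T a - {x. f \<in> set (snd x)}) \<inter> {x. f \<in> ledges (fst x)}. AC (fst x) * PW (snd x) * Uw T m \<epsilon> \<delta> (last (snd x)) f)
       = (\<Sum>(S, q)\<in>Qset T a f. AC S * (if q = [] then 1 else PW q * NW (last q, f)))"
proof (rule sum.mono_neutral_cong_right)
  show "finite ((SPa T a - {x. f \<in> set (snd x)}) \<inter> {x. f \<in> ledges (fst x)})" using finite_SPa by simp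
  show "Qset T a f \<subseteq> (SPa T a - {x. f \<in> set (snd x)}) \<inter> {x. f \<in> ledges (fst x)}"
    using af by (auto simp: Qset_def SPa_def)
  show "\<forall>i\<in>(SPa T a - {x. f \<in> set (snd x)}) \<inter> {x. f \<in> ledges (fst x)} - Qset T a f.
      AC (fst i) * PW (snd i) * Uw T m \<epsilon> \<delta> (last (snd i)) f = 0"
    by (auto simp: Qset_def SPa_def Uw_def)
  show "\<And>x. x \<in> Qset T a f \<Longrightarrow> AC (fst x) * PW (snd x) * Uw T m \<epsilon> \<delta> (last (snd x)) f
      = (case x of (S, q) \<Rightarrow> AC S * (if q = [] then 1 else PW q * NW (last q, f)))"
    using af by (auto simp: Qset_def Uw_def is_path_def)
qed

lemma sum_P1:
  assumes fE: "f \<in> lattice_edges T" and af: "a \<noteq> f"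
  shows "(\<Sum>x\<in>(SPa T a - {x. f \<in> set (snd x)}) - {x. f \<in> ledges (fst x)}. AC (fst x) * PW (snd x) * Uw T m \<epsilon> \<delta> (last (snd x)) f)
       = Num T m \<epsilon> \<delta> a f"
proof -
  let ?A = "(SPa T a - {x. f \<in> set (snd x)}) - {x. f \<in> ledges (fst x)}"
  let ?A' = "{x \<in> ?A. edge_end T (last (snd x)) = edge_start f}"
  let ?G = "\<lambda>x. AC (fst x) * PW (snd x) * Uw T m \<epsilon> \<delta> (last (snd x)) f"
  have "sum ?G ?A = sum ?G ?A'"
    by (rule sum.mono_neutral_right) (use finite_SPa in \<open>auto simp: Uw_def\<close>)
  also have "\<dots> = (\<Sum>x\<in>source_sink_configs T a f. AC (fst x) * PW (snd x))"
  proof (rule sum.reindex_bij_witness[where i = "\<lambda>x. (fst x, butlast (snd x))" and j = "\<lambda>x. (fst x, snd x @ [f])"])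
    fix x assume x: "x \<in> ?A'"
    then show "(fst (fst x, snd x @ [f]), butlast (snd (fst x, snd x @ [f]))) = x" by simp
    obtain S p where xx: "x = (S, p)" by (cases x)
    have S: "S \<in> loop_configs T" and pp: "is_path T p" and hp: "hd p = a" and dj: "ledges S \<inter> set p = {}"
      and fp: "f \<notin> set p" and fS: "f \<notin> ledges S" and adj: "edge_end T (last p) = edge_start f"
      using x xx by (auto simp: SPa_def)
    have pne: "p \<noteq> []" using pp by (simp add: is_path_def)
    have pf: "is_path T (p @ [f])" using pp fp fE adj pne
      by (auto simp: is_path_def chained_append chained_Cons)
    show "(fst x, snd x @ [f]) \<in> source_sink_configs T a f"
      using S pf hp pne dj fS xx by (auto simp: source_sink_configs_def ledges_def)
    show "AC (fst (fst x, snd x @ [f])) * PW (snd (fst x, snd x @ [f])) = ?G x"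
      using xx adj pathw_append[OF pne, of "[f]" T m \<epsilon> \<delta>] by (simp add: Uw_def)
  next
    fix y assume y: "y \<in> source_sink_configs T a f"
    obtain S p where yy: "y = (S, p)" by (cases y)
    have S: "S \<in> loop_configs T" and pp: "is_path T p" and hp: "hd p = a" and lp: "last p = f"
      and dj: "\<forall>L\<in>S. loop_edges L \<inter> set p = {}"
      using y yy by (auto simp: source_sink_configs_def)
    have pne: "p \<noteq> []" using pp by (simp add: is_path_def)
    have pe: "p = butlast p @ [f]" by (metis append_butlast_last_id pne lp)
    have bne: "butlast p \<noteq> []"
    proof
      assume "butlast p = []"
      then have "p = [f]" using pe by simp
      then show False using hp af by simp
    qed
    show "(fst (fst y, butlast (snd y)), snd (fst y, butlast (snd y)) @ [f]) = y"
      using yy pe by simp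
    have d: "distinct p" and ch: "chained T p" and sE: "set p \<subseteq> lattice_edges T"
      using pp by (auto simp: is_path_def)
    have "distinct (butlast p @ [f])" using d pe by simp
    then have db: "distinct (butlast p)" "f \<notin> set (butlast p)" by simp_all
    have chb: "chained T (butlast p)" "edge_end T (last (butlast p)) = edge_start f"
      using ch pe bne chained_append[of T "butlast p" "[f]"] by auto
    have pb: "is_path T (butlast p)" using db chb sE bne
      by (auto simp: is_path_def dest: in_set_butlastD)
    have hb: "hd (butlast p) = a" using hp bne pe by (metis hd_append2)
    have fp: "f \<in> set p" using last_in_set[OF pne] lp by simp
    have fS: "f \<notin> ledges S" using dj fp by (auto simp: ledges_def)
    have djb: "ledges S \<inter> set (butlast p) = {}" using dj by (auto simp: ledges_def dest: in_set_butlastD)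
    show "(fst y, butlast (snd y)) \<in> ?A'"
      using S pb hb djb db(2) fS chb(2) yy by (auto simp: SPa_def)
  qed
  also have "\<dots> = Num T m \<epsilon> \<delta> a f"
    unfolding Num_def by (simp add: arrow_path_pathw[OF d1 d0] split_beta)
  finally show ?thesis .
qed

lemma CL_ne:
  assumes fE: "f \<in> lattice_edges T" and af: "a \<noteq> f"
  shows "(\<Sum>e\<in>lattice_edges T. Num T m \<epsilon> \<delta> a e * Uw T m \<epsilon> \<delta> e f) = Num T m \<epsilon> \<delta> a f"
proof -
  let ?G = "\<lambda>x. AC (fst x) * PW (snd x) * Uw T m \<epsilon> \<delta> (last (snd x)) f"
  let ?P2 = "{x. f \<in> set (snd x)}" and ?P3 = "{x. f \<in> ledges (fst x)}"
  have fin: "finite (SPa T a)" by (rule finite_SPa)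
  have "sum ?G (SPa T a) = sum ?G (SPa T a \<inter> ?P2) + sum ?G (SPa T a - ?P2)"
    by (rule sum.Int_Diff[OF fin])
  also have "sum ?G (SPa T a - ?P2) = sum ?G ((SPa T a - ?P2) \<inter> ?P3) + sum ?G ((SPa T a - ?P2) - ?P3)"
    by (rule sum.Int_Diff) (use fin in simp)
  finally have "sum ?G (SPa T a) = sum ?G (SPa T a \<inter> ?P2) + (sum ?G ((SPa T a - ?P2) \<inter> ?P3) + sum ?G ((SPa T a - ?P2) - ?P3))" .
  then have "sum ?G (SPa T a) = Num T m \<epsilon> \<delta> a f"
    unfolding sum_P2[OF fE] sum_P3[OF fE af] sum_P1[OF fE af] by simp
  then show ?thesis using lhs_SPa[OF fE, where a=a] by simp
qed

lemma CL:
  assumes aE: "a \<in> lattice_edges T" and fE: "f \<in> lattice_edges T"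
  shows "(\<Sum>e\<in>lattice_edges T. Num T m \<epsilon> \<delta> a e * (of_bool (e = f) - Uw T m \<epsilon> \<delta> e f))
       = (if a = f then Zs T m \<epsilon> \<delta> else 0)"
proof -
  have "(\<Sum>e\<in>lattice_edges T. Num T m \<epsilon> \<delta> a e * (of_bool (e = f) - Uw T m \<epsilon> \<delta> e f))
      = (\<Sum>e\<in>lattice_edges T. Num T m \<epsilon> \<delta> a e * of_bool (e = f)) - (\<Sum>e\<in>lattice_edges T. Num T m \<epsilon> \<delta> a e * Uw T m \<epsilon> \<delta> e f)"
    by (simp add: right_diff_distrib sum_subtractf)
  also have "(\<Sum>e\<in>lattice_edges T. Num T m \<epsilon> \<delta> a e * of_bool (e = f)) = Num T m \<epsilon> \<delta> a f"
  proof -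
    have "(\<Sum>e\<in>lattice_edges T. Num T m \<epsilon> \<delta> a e * of_bool (e = f))
        = (\<Sum>e\<in>lattice_edges T. if e = f then Num T m \<epsilon> \<delta> a f else 0)"
      by (rule sum.cong) auto
    then show ?thesis using fE finite_E[of T] by simp
  qed
  finally show ?thesis
    using CL_self[OF aE] CL_ne[OF fE] by (cases "a = f") auto
qed

end



definition sg :: "edge \<Rightarrow> complex" where "sg e = (if edge_dir e then 1 else -1)"

lemma sg_sq[simp]: "sg e * sg e = 1" by (simp add: sg_def)

lemma mod_cancel_nat:
  fixes x x' k N :: nat
  assumes "x < N" "x' < N" "(x + k) mod N = (x' + k) mod N"
  shows "x = x'"
proof -
  have *: "x = x'" if "x' \<le> x" "x < N" "(x + k) mod N = (x' + k) mod N" for x x' :: nat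
  proof -
    have "N dvd (x + k) - (x' + k)" using that by (simp add: mod_eq_dvd_iff_nat)
    then have "N dvd x - x'" by simp
    moreover have "x - x' < N" using that by simp
    ultimately have "x - x' = 0" using dvd_imp_le by (metis neq0_conv not_less)
    then show ?thesis using that by simp
  qed
  show ?thesis
  proof (cases "x' \<le> x")
    case True then show ?thesis using * assms by blast
  next
    case False
    have "x' = x" by (rule *) (use False assms in auto)
    then show ?thesis by simp
  qed
qed

lemma end_inj:
  assumes "c \<in> lattice_edges T" "c' \<in> lattice_edges T" "edge_end T c = edge_end T c'"
    "edge_dir c = edge_dir c'" "T > 0"
  shows "c = c'"
proof -
  obtain x y d where c: "c = (x, y, d)" by (cases c)
  obtain x' y' d' where c': "c' = (x', y', d')" by (cases c')
  have b: "x < 2*T" "y < 2*T" "x' < 2*T" "y' < 2*T" using assms(1,2) c c' by (auto simp: lattice_edges_def)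
  have dd: "d' = d" using assms(4) c c' by (simp add: edge_dir_def)
  have ey: "(y + 1) mod (2*T) = (y' + 1) mod (2*T)" using assms(3) c c' by (simp add: edge_end_def)
  have "y = y'" by (rule mod_cancel_nat[OF b(2,4) ey])
  moreover have "x = x'"
  proof (cases d)
    case True
    then have "(x + 1) mod (2*T) = (x' + 1) mod (2*T)" using assms(3) c c' dd by (simp add: edge_end_def)
    then show ?thesis by (rule mod_cancel_nat[OF b(1,3)])
  next
    case False
    then have "(x + (2*T - 1)) mod (2*T) = (x' + (2*T - 1)) mod (2*T)" using assms(3,5) c c' dd
      by (simp add: edge_end_def)
    then show ?thesis by (rule mod_cancel_nat[OF b(1,3)])
  qed
  ultimately show ?thesis using c c' dd by simp
qed

lemma even_mod2T: "even (n mod (2 * T)) = even (n::nat)"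
  by (simp add: dvd_mod_iff)

lemma end_lattice:
  assumes "c \<in> lattice_edges T" "T > 0"
  shows "(fst (edge_end T c), snd (edge_end T c), d) \<in> lattice_edges T"
proof -
  obtain x y d0 where c: "c = (x, y, d0)" by (cases c)
  have ev: "even (x + y)" using assms c by (simp add: lattice_edges_def)
  let ?X = "if d0 then x + 1 else x + 2 * T - 1"
  have e: "edge_end T c = (?X mod (2*T), (y + 1) mod (2*T))" using c by (simp add: edge_end_def)
  have "even (?X + (y + 1))"
  proof (cases d0)
    case True then show ?thesis using ev by simp
  next
    case False
    have "x + 2 * T - 1 + (y + 1) = (x + y) + 2 * T" using assms(2) by simp
    then show ?thesis using False ev assms(2) by simp
  qed
  then have "even (?X mod (2*T) + (y + 1) mod (2*T))"
    using even_mod2T[of ?X T] even_mod2T[of "y+1" T] by auto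
  then show ?thesis using e assms(2) by (simp add: lattice_edges_def)
qed


lemma sqrt_c_sq:
  assumes "0 \<le> x" shows "complex_of_real (sqrt x) * complex_of_real (sqrt x) = complex_of_real x"
proof -
  have "sqrt x * sqrt x = x" using assms by simp
  then have "complex_of_real (sqrt x * sqrt x) = complex_of_real x" by simp
  then show ?thesis by (simp only: of_real_mult)
qed

lemma sumU:
  assumes "c \<in> lattice_edges T" "c' \<in> lattice_edges T" "T > 0" "\<delta> < 1" "0 \<le> \<delta>"
  shows "(\<Sum>b\<in>lattice_edges T. Uw T m \<epsilon> \<delta> c b * sg b * Uw T m \<epsilon> \<delta> c' b) = (if c = c' then sg c else 0)"
proof -
  define v where "v = edge_end T c"
  define bT where "bT = (fst v, snd v, True)"
  define bF where "bF = (fst v, snd v, False)"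
  have inE: "bT \<in> lattice_edges T" "bF \<in> lattice_edges T"
    using end_lattice[OF assms(1,3)] unfolding bT_def bF_def v_def by auto
  have sb: "edge_start bT = v" "edge_start bF = v" "edge_dir bT" "\<not> edge_dir bF" "bT \<noteq> bF"
    by (auto simp: bT_def bF_def edge_start_def edge_dir_def)
  let ?t = "\<lambda>b. Uw T m \<epsilon> \<delta> c b * sg b * Uw T m \<epsilon> \<delta> c' b"
  have "(\<Sum>b\<in>lattice_edges T. ?t b) = (\<Sum>b\<in>{bT, bF}. ?t b)"
  proof (rule sum.mono_neutral_right[OF finite_E])
    show "{bT, bF} \<subseteq> lattice_edges T" using inE by simp
    show "\<forall>i\<in>lattice_edges T - {bT, bF}. ?t i = 0"
    proof
      fix b assume b: "b \<in> lattice_edges T - {bT, bF}"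
      have "edge_start b \<noteq> v"
      proof
        assume "edge_start b = v"
        then have "b = bT \<or> b = bF" unfolding bT_def bF_def
          by (cases b) (auto simp: edge_start_def)
        then show False using b by simp
      qed
      then show "?t b = 0" by (simp add: Uw_def v_def)
    qed
  qed
  also have "\<dots> = ?t bT + ?t bF" using sb(5) by simp
  finally have sum2: "(\<Sum>b\<in>lattice_edges T. ?t b) = ?t bT + ?t bF" .
  show ?thesis
  proof (cases "edge_end T c' = v")
    case False
    then have "Uw T m \<epsilon> \<delta> c' bT = 0" "Uw T m \<epsilon> \<delta> c' bF = 0" using sb by (auto simp: Uw_def)
    moreover have "c \<noteq> c'" using False v_def by auto
    ultimately show ?thesis using sum2 by simp
  next
    case True
    have u: "Uw T m \<epsilon> \<delta> c bT = nw T m \<epsilon> \<delta> (c, bT)" "Uw T m \<epsilon> \<delta> c bF = nw T m \<epsilon> \<delta> (c, bF)"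
      "Uw T m \<epsilon> \<delta> c' bT = nw T m \<epsilon> \<delta> (c', bT)" "Uw T m \<epsilon> \<delta> c' bF = nw T m \<epsilon> \<delta> (c', bF)"
      using sb True by (auto simp: Uw_def v_def)
    have ne: "node_even T (c, b) = even (fst v)" "node_even T (c', b) = even (fst v)" for b
      using True by (auto simp: node_even_def v_def)
    have tu: "is_turn (e, b) = (edge_dir e \<noteq> edge_dir b)" for e b
      by (simp add: is_turn_def orthogonal_def)
    have d2: "0 \<le> 1 - \<delta>\<^sup>2"
    proof -
      have "\<delta> * \<delta> \<le> \<delta> * 1" using assms by (intro mult_left_mono) auto
      then show ?thesis using assms by (simp add: power2_eq_square)
    qed
    have d2': "0 < 1 - \<delta>\<^sup>2"
    proof -
      have "\<delta> * \<delta> \<le> \<delta> * 1" using assms by (intro mult_left_mono) auto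
      then show ?thesis using assms by (simp add: power2_eq_square)
    qed
    have m2: "0 < 1 + m\<^sup>2 * \<epsilon>\<^sup>2" by (simp add: add_pos_nonneg)
    define K0 where "K0 = complex_of_real (sqrt (1 - \<delta>\<^sup>2))"
    define K1 where "K1 = complex_of_real (sqrt (1 + m\<^sup>2 * \<epsilon>\<^sup>2))"
    have K0: "K0 * K0 = complex_of_real (1 - \<delta>\<^sup>2)" "K0 \<noteq> 0"
      using sqrt_c_sq[OF d2] d2' by (auto simp: K0_def)
    have K1: "K1 * K1 = complex_of_real (1 + m\<^sup>2 * \<epsilon>\<^sup>2)" "K1 \<noteq> 0"
      using sqrt_c_sq[of "1 + m\<^sup>2 * \<epsilon>\<^sup>2"] m2 by (auto simp: K1_def)
    have K0': "K0 * K0 = 1 - (complex_of_real \<delta>)\<^sup>2" using K0(1) by simp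
    have K1': "K1 * K1 = 1 + (complex_of_real m)\<^sup>2 * (complex_of_real \<epsilon>)\<^sup>2" using K1(1) by simp
    have nwv: "nw T m \<epsilon> \<delta> (e, b) = (if even (fst v)
      then (if edge_dir e \<noteq> edge_dir b then complex_of_real (- \<delta>) else 1) / K0
      else (if edge_dir e \<noteq> edge_dir b then - \<i> * complex_of_real (m * \<epsilon>) else 1) / K1)"
      if "e = c \<or> e = c'" for e b
    proof -
      have "node_even T (e, b) = even (fst v)" using that ne by blast
      then show ?thesis by (simp add: nw_def tu K0_def K1_def)
    qed
    show ?thesis
    proof (cases "c = c'")
      case True
      have K1nz: "K1 * K1 \<noteq> 0" using K1(2) by simp
      show ?thesis unfolding sum2 u using True sb K0' K1' K0(2) K1(2) K1nz
        by (cases "edge_dir c'"; cases "even (fst v)")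
           (simp_all add: nwv sg_def field_simps power2_eq_square)
    next
      case False
      then have "edge_dir c \<noteq> edge_dir c'" using end_inj[OF assms(1,2)] True assms(3) v_def by auto
      then show ?thesis unfolding sum2 u using sb False K0(2) K1(2)
        by (cases "edge_dir c'"; cases "even (fst v)")
           (simp_all add: nwv sg_def field_simps)
    qed
  qed
qed


lemma matrix_algebra:
  fixes E :: "'e set" and G U :: "'e \<Rightarrow> 'e \<Rightarrow> complex" and s :: "'e \<Rightarrow> complex"
  assumes fin: "finite E"
    and star: "\<And>a f. a \<in> E \<Longrightarrow> f \<in> E \<Longrightarrow> (\<Sum>e\<in>E. G a e * (of_bool (e = f) - U e f)) = of_bool (a = f)"
    and uu: "\<And>c c'. c \<in> E \<Longrightarrow> c' \<in> E \<Longrightarrow> (\<Sum>b\<in>E. U c b * s b * U c' b) = (if c = c' then s c else 0)"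
    and ss: "\<And>e. s e * s e = 1"
    and aE: "a \<in> E" and fE: "f \<in> E"
  shows "s a * s f * G f a = of_bool (a = f) - G a f"
proof -
  have delta: "(\<Sum>e\<in>E. g e * of_bool (e = b)) = g b" if "b \<in> E" for g :: "'e \<Rightarrow> complex" and b
  proof -
    have "(\<Sum>e\<in>E. g e * of_bool (e = b)) = (\<Sum>e\<in>E. if e = b then g b else 0)"
      by (rule sum.cong) auto
    then show ?thesis using that fin by simp
  qed
  have delta': "(\<Sum>e\<in>E. of_bool (b = e) * g e) = g b" if "b \<in> E" for g :: "'e \<Rightarrow> complex" and b
  proof -
    have "(\<Sum>e\<in>E. of_bool (b = e) * g e) = (\<Sum>e\<in>E. if b = e then g b else 0)"
      by (rule sum.cong) auto
    then show ?thesis using that fin by simp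
  qed
  have gi: "G x b = of_bool (x = b) + (\<Sum>e\<in>E. G x e * U e b)" if "x \<in> E" "b \<in> E" for x b
  proof -
    have "(\<Sum>e\<in>E. G x e * (of_bool (e = b) - U e b))
        = (\<Sum>e\<in>E. G x e * of_bool (e = b)) - (\<Sum>e\<in>E. G x e * U e b)"
      by (simp add: right_diff_distrib sum_subtractf)
    then show ?thesis using star[OF that] delta[OF that(2)] by simp
  qed
  have gii: "(\<Sum>b\<in>E. G x b * s b * U c b) = s x * U c x + G x c * s c" if "x \<in> E" "c \<in> E" for x c
  proof -
    have "(\<Sum>b\<in>E. G x b * s b * U c b)
        = (\<Sum>b\<in>E. (of_bool (x = b) + (\<Sum>e\<in>E. G x e * U e b)) * s b * U c b)"
      by (rule sum.cong[OF refl]) (simp add: gi[OF that(1)])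
    also have "\<dots> = (\<Sum>b\<in>E. of_bool (x = b) * (s b * U c b)) + (\<Sum>b\<in>E. (\<Sum>e\<in>E. G x e * U e b) * (s b * U c b))"
      by (simp add: distrib_right sum.distrib mult.assoc)
    also have "(\<Sum>b\<in>E. (\<Sum>e\<in>E. G x e * U e b) * (s b * U c b)) = (\<Sum>b\<in>E. \<Sum>e\<in>E. G x e * (U e b * s b * U c b))"
    proof (rule sum.cong[OF refl])
      fix b
      show "(\<Sum>e\<in>E. G x e * U e b) * (s b * U c b) = (\<Sum>e\<in>E. G x e * (U e b * s b * U c b))"
        unfolding sum_distrib_right by (rule sum.cong[OF refl]) (simp add: mult_ac)
    qed
    also have "(\<Sum>b\<in>E. of_bool (x = b) * (s b * U c b)) = s x * U c x"
      using delta'[OF that(1)] by simp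
    also have "(\<Sum>b\<in>E. \<Sum>e\<in>E. G x e * (U e b * s b * U c b)) = (\<Sum>e\<in>E. G x e * (\<Sum>b\<in>E. U e b * s b * U c b))"
      by (subst sum.swap) (simp add: sum_distrib_left)
    also have "\<dots> = (\<Sum>e\<in>E. G x e * (if e = c then s e else 0))"
      by (rule sum.cong[OF refl]) (simp add: uu that(2))
    also have "\<dots> = G x c * s c"
    proof -
      have "(\<Sum>e\<in>E. G x e * (if e = c then s e else 0)) = (\<Sum>e\<in>E. if e = c then G x c * s c else 0)"
        by (rule sum.cong) auto
      then show ?thesis using fin that(2) by simp
    qed
    finally show ?thesis .
  qed
  have giii: "(\<Sum>b\<in>E. (of_bool (c = b) - U c b) * (s b * s x * G x b)) = - U c x" if "c \<in> E" "x \<in> E" for c x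
  proof -
    have "(\<Sum>b\<in>E. (of_bool (c = b) - U c b) * (s b * s x * G x b))
        = (\<Sum>b\<in>E. of_bool (c = b) * (s b * s x * G x b)) - s x * (\<Sum>b\<in>E. G x b * s b * U c b)"
      by (simp add: left_diff_distrib sum_subtractf sum_distrib_left algebra_simps)
    also have "\<dots> = s c * s x * G x c - s x * (s x * U c x + G x c * s c)"
      using delta'[OF that(1)] gii[OF that(2,1)] by simp
    also have "\<dots> = - U c x" using ss[of x] by (simp add: algebra_simps)
    finally show ?thesis .
  qed
  have "(\<Sum>c\<in>E. G a c * (\<Sum>b\<in>E. (of_bool (c = b) - U c b) * (s b * s f * G f b)))
      = (\<Sum>c\<in>E. G a c * (- U c f))"
    by (rule sum.cong[OF refl]) (simp add: giii fE)
  also have "\<dots> = of_bool (a = f) - G a f"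
    using gi[OF aE fE] by (simp add: sum_negf)
  finally have l: "(\<Sum>c\<in>E. G a c * (\<Sum>b\<in>E. (of_bool (c = b) - U c b) * (s b * s f * G f b)))
      = of_bool (a = f) - G a f" .
  have "(\<Sum>c\<in>E. G a c * (\<Sum>b\<in>E. (of_bool (c = b) - U c b) * (s b * s f * G f b)))
      = (\<Sum>b\<in>E. (\<Sum>c\<in>E. G a c * (of_bool (c = b) - U c b)) * (s b * s f * G f b))"
    by (simp add: sum_distrib_left sum_distrib_right mult.assoc) (rule sum.swap)
  also have "\<dots> = (\<Sum>b\<in>E. of_bool (a = b) * (s b * s f * G f b))"
    by (rule sum.cong[OF refl]) (simp add: star aE)
  also have "\<dots> = s a * s f * G f a" using delta'[OF aE] by simp
  finally show ?thesis using l by simp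
qed

theorem proposition13:
  fixes T :: nat and \<epsilon> m \<delta> :: real and a f :: edge
  assumes "T > 0" and "\<epsilon> > 0" and "m > 0" and "0 < \<delta>" and "\<delta> < 1"
    and "a \<in> lattice_edges T" and "f \<in> lattice_edges T" and "a \<noteq> f"
  shows "(orthogonal a f \<longrightarrow> propagator a f m \<epsilon> \<delta> T = propagator f a m \<epsilon> \<delta> T)
       \<and> (parallel a f \<longrightarrow> propagator a f m \<epsilon> \<delta> T = - propagator f a m \<epsilon> \<delta> T)"
proof (cases "Zs T m \<epsilon> \<delta> = 0")
  case True
  then show ?thesis by (simp add: propagator_eq)
next
  case False
  let ?Z = "Zs T m \<epsilon> \<delta>"
  define G where "G x y = Num T m \<epsilon> \<delta> x y / ?Z" for x y
  have d0: "0 \<le> \<delta>" using assms(4) by simp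
  have star: "(\<Sum>e\<in>lattice_edges T. G x e * (of_bool (e = y) - Uw T m \<epsilon> \<delta> e y)) = of_bool (x = y)"
    if "x \<in> lattice_edges T" "y \<in> lattice_edges T" for x y
  proof -
    have "(\<Sum>e\<in>lattice_edges T. G x e * (of_bool (e = y) - Uw T m \<epsilon> \<delta> e y))
        = (\<Sum>e\<in>lattice_edges T. Num T m \<epsilon> \<delta> x e * (of_bool (e = y) - Uw T m \<epsilon> \<delta> e y)) / ?Z"
      by (simp add: G_def sum_divide_distrib)
    also have "\<dots> = of_bool (x = y)"
      using CL[OF assms(1) assms(5) d0 that] False by simp
    finally show ?thesis .
  qed
  have key: "sg a * sg f * G f a = - G a f"
    using matrix_algebra[OF finite_E star sumU[OF _ _ assms(1,5) d0] sg_sq assms(6,7)] assms(8) by simp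
  have pa: "propagator a f m \<epsilon> \<delta> T = G a f" "propagator f a m \<epsilon> \<delta> T = G f a"
    by (simp_all add: propagator_eq G_def)
  show ?thesis
  proof (intro conjI impI)
    assume "orthogonal a f"
    then have "sg a * sg f = -1" by (auto simp: orthogonal_def sg_def)
    then show "propagator a f m \<epsilon> \<delta> T = propagator f a m \<epsilon> \<delta> T" using key pa by simp
  next
    assume "parallel a f"
    then have "sg a * sg f = 1" by (auto simp: parallel_def sg_def)
    then show "propagator a f m \<epsilon> \<delta> T = - propagator f a m \<epsilon> \<delta> T" using key pa by simp
  qed
qed

end
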